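(* Let $n\ge1$, let $a_1,\dots,a_n\ge2$ be integers, $d_0=1$, $d_i=a_1\cdots a_i$, and $I'_n=\{\kappa\in\{1,\dots,d_n\}\mid a_n\nmid\kappa\}$. Let $K_n:=\{\mathbf{k}=(k_1,\dots,k_n)\in\mathbb{Z}^n\mid 0\le k_i\le a_i-1\ (i=1,\dots,n-1),\ 0\le k_n\le a_n-2\}$. Then the map $$\psi:K_n\to I'_n,\qquad \psi(k_1,\dots,k_n):=\sum_{l=1}^n(-1)^{l-1}\frac{d_n}{d_l}(k_l+1)$$ is a well-defined bijection between sets of $d_n-d_{n-1}$ elements, and it satisfies $\omega^{(n)}_{\psi(\mathbf{k}),i}=\omega^{(n)}_{\mathbf{k},i}$ for all $\mathbf{k}\in K_n$ and $i=1,\dots,n$. In particular $\psi(0,\dots,0)=\sum_{l=1}^n(-1)^{l-1}\frac{d_n}{d_l}$.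
   Context: Here, for $\mathbf{k}\in\mathbb{Z}^n$, $(\omega^{(n)}_{\mathbf{k},1},\dots,\omega^{(n)}_{\mathbf{k},n}):=(k_1+1,\dots,k_n+1)\mathbb{E}^{-T}$ with $\mathbb{E}=(a_i\delta_{i,j}+\delta_{i+1,j})_{i,j=1}^n$ and $\mathbb{E}^{-T}=(\mathbb{E}^{-1})^T$; and for $\kappa\in I'_n$, $\omega^{(n)}_{\kappa,i}:=(-1)^{i-1}\frac{d_{i-1}}{d_n}\kappa-\lfloor(-1)^{i-1}\frac{d_{i-1}}{d_n}\kappa\rfloor$. *)

theory Defs
  imports Complex_Main
begin

text \<open>Parameters a_1,...,a_n are given as a function a :: nat => int, only the
values on 1..n matter. Vectors in Z^n are functions nat => int supported on 1..n.\<close>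

definition dd :: "(nat \<Rightarrow> int) \<Rightarrow> nat \<Rightarrow> int" where
  "dd a i = (\<Prod>j\<in>{1..i}. a j)"

definition Iprime :: "(nat \<Rightarrow> int) \<Rightarrow> nat \<Rightarrow> int set" where
  "Iprime a n = {\<kappa>. 1 \<le> \<kappa> \<and> \<kappa> \<le> dd a n \<and> \<not> (a n dvd \<kappa>)}"

definition Kset :: "(nat \<Rightarrow> int) \<Rightarrow> nat \<Rightarrow> (nat \<Rightarrow> int) set" where
  "Kset a n = {k. (\<forall>i\<in>{1..<n}. 0 \<le> k i \<and> k i \<le> a i - 1) \<and> 0 \<le> k n \<and> k n \<le> a n - 2
                 \<and> (\<forall>i. i \<notin> {1..n} \<longrightarrow> k i = 0)}"

definition psi :: "(nat \<Rightarrow> int) \<Rightarrow> nat \<Rightarrow> (nat \<Rightarrow> int) \<Rightarrow> int" where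
  "psi a n k = (\<Sum>l=1..n. (-1)^(l-1) * (dd a n div dd a l) * (k l + 1))"

definition Emat :: "(nat \<Rightarrow> int) \<Rightarrow> nat \<Rightarrow> nat \<Rightarrow> real" where
  "Emat a i j = (if i = j then real_of_int (a i) else 0) + (if j = i + 1 then 1 else 0)"

definition Einv :: "(nat \<Rightarrow> int) \<Rightarrow> nat \<Rightarrow> nat \<Rightarrow> nat \<Rightarrow> real" where
  "Einv a n = (THE B. (\<forall>i\<in>{1..n}. \<forall>j\<in>{1..n}.
                   (\<Sum>l=1..n. Emat a i l * B l j) = (if i = j then 1 else 0)) \<and>
                (\<forall>i j. i \<notin> {1..n} \<or> j \<notin> {1..n} \<longrightarrow> B i j = 0))"

text \<open>omega_{k,j} = j-th entry of the row vector (k_1+1,...,k_n+1) E^{-T},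
  where (E^{-T})_{i,j} = (E^{-1})_{j,i}.\<close>
definition omega_vec :: "(nat \<Rightarrow> int) \<Rightarrow> nat \<Rightarrow> (nat \<Rightarrow> int) \<Rightarrow> nat \<Rightarrow> real" where
  "omega_vec a n k j = (\<Sum>i=1..n. real_of_int (k i + 1) * Einv a n j i)"

definition omega_kappa :: "(nat \<Rightarrow> int) \<Rightarrow> nat \<Rightarrow> int \<Rightarrow> nat \<Rightarrow> real" where
  "omega_kappa a n \<kappa> i =
     (let x = (-1)^(i-1) * real_of_int (dd a (i-1)) / real_of_int (dd a n) * real_of_int \<kappa>
      in x - real_of_int \<lfloor>x\<rfloor>)"

end

theory Submission imports Defs "HOL-Library.FuncSet" begin

lemma dd_0[simp]: "dd a 0 = 1" by (simp add: dd_def)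
lemma dd_Suc: "dd a (Suc i) = dd a i * a (Suc i)"
  unfolding dd_def by (simp add: prod.nat_ivl_Suc' mult.commute)

lemma dd_pos: assumes "\<forall>i\<in>{1..n}. a i \<ge> 2" shows "i \<le> n \<Longrightarrow> dd a i > 0"
proof (induction i)
  case 0 then show ?case by simp
next
  case (Suc i) then have "a (Suc i) \<ge> 2" using assms by auto
  with Suc show ?case by (simp add: dd_Suc)
qed

lemma dd_dvd: "l \<le> m \<Longrightarrow> dd a l dvd dd a m"
proof (induction m)
  case 0 then show ?case by simp
next
  case (Suc m) then show ?case
    by (metis dd_Suc dvd_mult2 dvd_refl le_Suc_eq)
qed

lemma Emat_row:
  assumes "i \<in> {1..n}"
  shows "(\<Sum>l=1..n. Emat a i l * f l) = real_of_int (a i) * f i + (if i < n then f (Suc i) else 0)"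
proof -
  have "(\<Sum>l=1..n. Emat a i l * f l) = (\<Sum>l=1..n. (if l = i then real_of_int (a i) * f l else 0))
        + (\<Sum>l=1..n. (if l = Suc i then f l else 0))"
    unfolding sum.distrib[symmetric] by (rule sum.cong) (auto simp: Emat_def)
  also have "\<dots> = real_of_int (a i) * f i + (if i < n then f (Suc i) else 0)"
    using assms by (simp add: sum.delta')
  finally show ?thesis .
qed

definition Bx :: "(nat \<Rightarrow> int) \<Rightarrow> nat \<Rightarrow> nat \<Rightarrow> nat \<Rightarrow> real" where
  "Bx a n r c = (if 1 \<le> r \<and> r \<le> c \<and> c \<le> n then
      (-1)^(c-r) * real_of_int (dd a (r-1)) / real_of_int (dd a c) else 0)"

lemma Bx_prop:
  assumes A: "\<forall>i\<in>{1..n}. a i \<ge> 2"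
  shows "(\<forall>i\<in>{1..n}. \<forall>j\<in>{1..n}. (\<Sum>l=1..n. Emat a i l * Bx a n l j) = (if i = j then 1 else 0)) \<and>
    (\<forall>i j. i \<notin> {1..n} \<or> j \<notin> {1..n} \<longrightarrow> Bx a n i j = 0)"
  proof (intro conjI ballI allI impI)
  fix i j assume i: "i \<in> {1..n}" and j: "j \<in> {1..n}"
  have ai: "a i \<ge> 2" using A i by auto
  have Di: "dd a i = dd a (i-1) * a i" using i dd_Suc[of a "i-1"] by simp
  have Dpos: "dd a (i-1) > 0" using dd_pos[OF A, of "i-1"] i by auto
  have Dj: "dd a j > 0" using dd_pos[OF A, of j] j by auto
  have row: "(\<Sum>l=1..n. Emat a i l * Bx a n l j) = real_of_int (a i) * Bx a n i j + (if i < n then Bx a n (Suc i) j else 0)"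
    by (rule Emat_row[OF i])
  show "(\<Sum>l=1..n. Emat a i l * Bx a n l j) = (if i = j then 1 else 0)"
  proof (cases "i = j")
    case True
    have "real_of_int (a i) * Bx a n i i = 1" using i ai Dpos by (simp add: Bx_def Di)
    then show ?thesis unfolding row using True by (simp add: Bx_def)
  next
    case False
    show ?thesis
    proof (cases "i < j")
      case True
      then have ex: "j - i = Suc (j - Suc i)" by simp
      have "dd a i = dd a (Suc i - 1)" by simp
      show ?thesis unfolding row using True i j False Dj
        by (simp add: Bx_def Di ex)
    next
      case False then show ?thesis unfolding row using `i \<noteq> j` by (simp add: Bx_def)
    qed
  qed
next
  fix i j assume "i \<notin> {1..n} \<or> j \<notin> {1..n}"
  then show "Bx a n i j = 0" by (auto simp: Bx_def)
qed

lemma Einv_eq: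
  assumes A: "\<forall>i\<in>{1..n}. a i \<ge> 2"
  shows "Einv a n = Bx a n"
  unfolding Einv_def
proof (rule the_equality)
  note BxP = Bx_prop[OF A]
  show "(\<forall>i\<in>{1..n}. \<forall>j\<in>{1..n}. (\<Sum>l=1..n. Emat a i l * Bx a n l j) = (if i = j then 1 else 0)) \<and>
    (\<forall>i j. i \<notin> {1..n} \<or> j \<notin> {1..n} \<longrightarrow> Bx a n i j = 0)" by (rule BxP)
next
  fix B
  note BxP = Bx_prop[OF A]
  assume PB: "(\<forall>i\<in>{1..n}. \<forall>j\<in>{1..n}. (\<Sum>l=1..n. Emat a i l * B l j) = (if i = j then 1 else 0)) \<and>
    (\<forall>i j. i \<notin> {1..n} \<or> j \<notin> {1..n} \<longrightarrow> B i j = 0)"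
  show "B = Bx a n"
  proof (intro ext)
    fix r c
    show "B r c = Bx a n r c"
    proof (cases "r \<in> {1..n} \<and> c \<in> {1..n}")
      case False then show ?thesis using PB by (auto simp: Bx_def)
    next
      case True
      then have c: "c \<in> {1..n}" by auto
      have key: "\<forall>r. n - t = r \<longrightarrow> t < n \<longrightarrow> B r c = Bx a n r c" for t
      proof (induction t rule: less_induct)
        case (less t)
        show ?case
        proof (intro allI impI)
          fix r assume r: "n - t = r" "t < n"
          then have ri: "r \<in> {1..n}" by auto
          have ar: "real_of_int (a r) \<noteq> 0" using A ri by force
          have e1: "real_of_int (a r) * B r c + (if r < n then B (Suc r) c else 0) = (if r = c then 1 else 0)"
            using PB ri c Emat_row[OF ri, of a "\<lambda>l. B l c"] by auto
          have e2: "real_of_int (a r) * Bx a n r c + (if r < n then Bx a n (Suc r) c else 0) = (if r = c then 1 else 0)"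
            using BxP ri c Emat_row[OF ri, of a "\<lambda>l. Bx a n l c"] by auto
          have "(if r < n then B (Suc r) c else 0) = (if r < n then Bx a n (Suc r) c else 0)"
          proof (cases "r < n")
            case True
            then have "Suc r = n - (t - 1)" "t - 1 < t" using r by auto
            then show ?thesis using less[of "t - 1"] r by auto
          qed simp
          then have "real_of_int (a r) * B r c = real_of_int (a r) * Bx a n r c" using e1 e2 by linarith
          with ar show "B r c = Bx a n r c" by simp
        qed
      qed
      moreover have "n - (n - r) = r" "n - r < n" using True by auto
      ultimately show ?thesis by blast
    qed
  qed
qed

definition Sv :: "(nat \<Rightarrow> int) \<Rightarrow> nat \<Rightarrow> (nat \<Rightarrow> int) \<Rightarrow> nat \<Rightarrow> real" where
  "Sv a n k j = (\<Sum>i=j..n. (-1)^(i-j) * real_of_int (k i + 1) * real_of_int (dd a (j-1)) / real_of_int (dd a i))"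

lemma omega_vec_Sv:
  assumes A: "\<forall>i\<in>{1..n}. a i \<ge> 2" and j: "j \<in> {1..n}"
  shows "omega_vec a n k j = Sv a n k j"
  unfolding omega_vec_def Sv_def Einv_eq[OF A]
proof (rule sum.mono_neutral_cong_right)
  show "{j..n} \<subseteq> {1..n}" using j by auto
  show "\<forall>i\<in>{1..n} - {j..n}. real_of_int (k i + 1) * Bx a n j i = 0" by (auto simp: Bx_def)
  fix i assume "i \<in> {j..n}"
  then show "real_of_int (k i + 1) * Bx a n j i = (-1)^(i-j) * real_of_int (k i + 1) * real_of_int (dd a (j-1)) / real_of_int (dd a i)"
    using j by (simp add: Bx_def)
qed simp

lemma Sv_rec:
  assumes A: "\<forall>i\<in>{1..n}. a i \<ge> 2" and j: "1 \<le> j" "j \<le> n"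
  shows "real_of_int (a j) * Sv a n k j = real_of_int (k j + 1) - Sv a n k (Suc j)"
proof -
  have Dj: "dd a j = dd a (j-1) * a j" using j dd_Suc[of a "j-1"] by simp
  have Dpos: "dd a (j-1) > 0" using dd_pos[OF A, of "j-1"] j by auto
  have aj: "a j \<ge> 2" using A j by auto
  have "Sv a n k j = real_of_int (k j + 1) * real_of_int (dd a (j-1)) / real_of_int (dd a j)
     + (\<Sum>i=Suc j..n. (-1)^(i-j) * real_of_int (k i + 1) * real_of_int (dd a (j-1)) / real_of_int (dd a i))"
    unfolding Sv_def using j by (simp add: sum.atLeast_Suc_atMost)
  also have "real_of_int (k j + 1) * real_of_int (dd a (j-1)) / real_of_int (dd a j)
     = real_of_int (k j + 1) / real_of_int (a j)" using Dpos aj by (simp add: Dj)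
  also have "(\<Sum>i=Suc j..n. (-1)^(i-j) * real_of_int (k i + 1) * real_of_int (dd a (j-1)) / real_of_int (dd a i))
     = - Sv a n k (Suc j) / real_of_int (a j)"
  proof -
    have "(\<Sum>i=Suc j..n. (-1)^(i-j) * real_of_int (k i + 1) * real_of_int (dd a (j-1)) / real_of_int (dd a i))
      = (\<Sum>i=Suc j..n. - ((-1)^(i - Suc j) * real_of_int (k i + 1) * real_of_int (dd a (Suc j - 1)) / real_of_int (dd a i)) / real_of_int (a j))"
    proof (rule sum.cong)
      fix i assume i: "i \<in> {Suc j..n}"
      then have e: "i - j = Suc (i - Suc j)" by auto
      have ajr: "real_of_int (a j) \<noteq> 0" using aj by simp
      show "(-1)^(i-j) * real_of_int (k i + 1) * real_of_int (dd a (j-1)) / real_of_int (dd a i) =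
        - ((-1)^(i - Suc j) * real_of_int (k i + 1) * real_of_int (dd a (Suc j - 1)) / real_of_int (dd a i)) / real_of_int (a j)"
        using ajr by (simp add: e Dj)
    qed simp
    also have "\<dots> = - Sv a n k (Suc j) / real_of_int (a j)"
      unfolding Sv_def by (simp add: sum_divide_distrib sum_negf)
    finally show ?thesis .
  qed
  finally have eq: "Sv a n k j = real_of_int (k j + 1) / real_of_int (a j) + - Sv a n k (Suc j) / real_of_int (a j)" .
  have ajr: "real_of_int (a j) \<noteq> 0" using aj by simp
  have "real_of_int (a j) * Sv a n k j = real_of_int (a j) * (real_of_int (k j + 1) / real_of_int (a j)) - real_of_int (a j) * (Sv a n k (Suc j) / real_of_int (a j))"
    unfolding eq by (simp add: algebra_simps)
  also have "\<dots> = real_of_int (k j + 1) - Sv a n k (Suc j)" using ajr by simp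
  finally show ?thesis .
qed

lemma Sv_bounds:
  assumes A: "\<forall>i\<in>{1..n}. a i \<ge> 2" and k: "k \<in> Kset a n" and j: "1 \<le> j" "j \<le> n"
  shows "0 < Sv a n k j \<and> Sv a n k j < 1"
proof -
  have key: "\<forall>j. n - t = j \<longrightarrow> t < n \<longrightarrow> 0 < Sv a n k j \<and> Sv a n k j < 1" for t
  proof (induction t)
    case 0
    show ?case
    proof (intro allI impI)
      fix j assume "n - 0 = j" "0 < n"
      then have jn: "j = n" "1 \<le> n" by auto
      have r: "real_of_int (a n) * Sv a n k n = real_of_int (k n + 1)"
        using Sv_rec[OF A, of n k] jn by (simp add: Sv_def)
      have an: "a n \<ge> 2" using A jn by auto
      have "0 \<le> k n" "k n \<le> a n - 2" using k by (auto simp: Kset_def)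
      then have "0 < real_of_int (a n) * Sv a n k n" "real_of_int (a n) * Sv a n k n < real_of_int (a n) * 1"
        using r by linarith+
      then have h: "0 < real_of_int (a n) * Sv a n k n" "real_of_int (a n) * Sv a n k n < real_of_int (a n) * 1" .
      have ap: "real_of_int (a n) > 0" using an by simp
      have "0 < Sv a n k n" by (rule zero_less_mult_pos[OF h(1) ap])
      moreover have "Sv a n k n < 1" using mult_less_cancel_left_pos[OF ap] h(2) by blast
      ultimately show "0 < Sv a n k j \<and> Sv a n k j < 1" using jn by simp
    qed
  next
    case (Suc t)
    show ?case
    proof (intro allI impI)
      fix j assume jj: "n - Suc t = j" "Suc t < n"
      then have jn: "1 \<le> j" "j < n" "n - t = Suc j" by auto
      have IH: "0 < Sv a n k (Suc j) \<and> Sv a n k (Suc j) < 1" using Suc jn jj by auto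
      have r: "real_of_int (a j) * Sv a n k j = real_of_int (k j + 1) - Sv a n k (Suc j)"
        using Sv_rec[OF A, of j k] jn by simp
      have an: "a j \<ge> 2" using A jn by auto
      have "0 \<le> k j" "k j \<le> a j - 1" using k jn by (auto simp: Kset_def)
      then have "0 < real_of_int (a j) * Sv a n k j" "real_of_int (a j) * Sv a n k j < real_of_int (a j) * 1"
        using r IH by linarith+
      then have h: "0 < real_of_int (a j) * Sv a n k j" "real_of_int (a j) * Sv a n k j < real_of_int (a j) * 1" .
      have ap: "real_of_int (a j) > 0" using an by simp
      have "0 < Sv a n k j" by (rule zero_less_mult_pos[OF h(1) ap])
      moreover have "Sv a n k j < 1" using mult_less_cancel_left_pos[OF ap] h(2) by blast
      ultimately show "0 < Sv a n k j \<and> Sv a n k j < 1" by simp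
    qed
  qed
  have "n - (n - j) = j" "n - j < n" using j by auto
  then show ?thesis using key by blast
qed

definition xv :: "(nat \<Rightarrow> int) \<Rightarrow> nat \<Rightarrow> int \<Rightarrow> nat \<Rightarrow> real" where
  "xv a n \<kappa> i = (-1)^(i-1) * real_of_int (dd a (i-1)) / real_of_int (dd a n) * real_of_int \<kappa>"

lemma omega_kappa_xv: "omega_kappa a n \<kappa> i = xv a n \<kappa> i - real_of_int \<lfloor>xv a n \<kappa> i\<rfloor>"
  by (simp add: omega_kappa_def xv_def Let_def)

lemma psi_real:
  assumes A: "\<forall>i\<in>{1..n}. a i \<ge> 2"
  shows "real_of_int (psi a n k) = (\<Sum>l=1..n. (-1)^(l-1) * (real_of_int (dd a n) / real_of_int (dd a l)) * real_of_int (k l + 1))"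
  unfolding psi_def of_int_sum
  by (rule sum.cong) (auto simp: real_of_int_div dd_dvd)

lemma xv_int:
  assumes A: "\<forall>i\<in>{1..n}. a i \<ge> 2" and j: "1 \<le> j" "j \<le> n"
  shows "\<exists>m::int. xv a n (psi a n k) j = real_of_int m + Sv a n k j"
  using j
proof (induction j)
  case 0 then show ?case by simp
next
  case (Suc j)
  have Dn: "dd a n > 0" using dd_pos[OF A] by simp
  show ?case
  proof (cases "j = 0")
    case True
    have "xv a n (psi a n k) 1 = Sv a n k 1"
      unfolding xv_def psi_real[OF A] Sv_def sum_distrib_left
    proof (rule sum.cong)
      fix l assume l: "l \<in> {1..n}"
      have "dd a l > 0" using dd_pos[OF A, of l] l by auto
      then show "(- 1) ^ (1 - 1) * real_of_int (dd a (1 - 1)) / real_of_int (dd a n) *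
         ((- 1) ^ (l - 1) * (real_of_int (dd a n) / real_of_int (dd a l)) * real_of_int (k l + 1)) =
         (- 1) ^ (l - 1) * real_of_int (k l + 1) * real_of_int (dd a (1 - 1)) / real_of_int (dd a l)"
        using Dn by (simp add: field_simps)
    qed simp
    then show ?thesis using True by (intro exI[of _ 0]) simp
  next
    case False
    then obtain m where m: "xv a n (psi a n k) j = real_of_int m + Sv a n k j" using Suc by auto
    have j1: "1 \<le> j" "j \<le> n" using False Suc by auto
    have Dj: "dd a j = dd a (j-1) * a j" using j1 dd_Suc[of a "j-1"] by simp
    have sg: "(-1::real)^j = - ((-1)^(j-1))" using j1
    proof -
      obtain j' where "j = Suc j'" using j1 by (cases j) auto
      then show ?thesis by simp
    qed
    have "xv a n (psi a n k) (Suc j) = - real_of_int (a j) * xv a n (psi a n k) j"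
      unfolding xv_def by (simp add: Dj sg)
    also have "\<dots> = real_of_int (- a j * m - (k j + 1)) + Sv a n k (Suc j)"
      unfolding m using Sv_rec[OF A j1, of k] by (simp add: algebra_simps)
    finally show ?thesis by blast
  qed
qed


lemma xv1:
  assumes A: "\<forall>i\<in>{1..n}. a i \<ge> 2"
  shows "xv a n (psi a n k) 1 = Sv a n k 1"
proof -
  have Dn: "dd a n > 0" using dd_pos[OF A] by simp
  show ?thesis
      unfolding xv_def psi_real[OF A] Sv_def sum_distrib_left
    proof (rule sum.cong)
      fix l assume l: "l \<in> {1..n}"
      have "dd a l > 0" using dd_pos[OF A, of l] l by auto
      then show "(- 1) ^ (1 - 1) * real_of_int (dd a (1 - 1)) / real_of_int (dd a n) *
         ((- 1) ^ (l - 1) * (real_of_int (dd a n) / real_of_int (dd a l)) * real_of_int (k l + 1)) =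
         (- 1) ^ (l - 1) * real_of_int (k l + 1) * real_of_int (dd a (1 - 1)) / real_of_int (dd a l)"
        using Dn by (simp add: field_simps)
    qed simp
qed

lemma omega_eq:
  assumes A: "\<forall>i\<in>{1..n}. a i \<ge> 2" and k: "k \<in> Kset a n" and j: "1 \<le> j" "j \<le> n"
  shows "omega_kappa a n (psi a n k) j = Sv a n k j"
proof -
  obtain m where m: "xv a n (psi a n k) j = real_of_int m + Sv a n k j" using xv_int[OF A j] by blast
  have b: "0 < Sv a n k j" "Sv a n k j < 1" using Sv_bounds[OF A k j] by auto
  have "\<lfloor>xv a n (psi a n k) j\<rfloor> = m" unfolding m using b by (simp add: floor_eq_iff)
  then show ?thesis unfolding omega_kappa_xv m by simp
qed

lemma Sv_Suc_n: "Sv a n k (Suc n) = 0" by (simp add: Sv_def)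

lemma psi_inj:
  assumes A: "\<forall>i\<in>{1..n}. a i \<ge> 2"
  shows "inj_on (psi a n) (Kset a n)"
proof (rule inj_onI)
  fix k k' assume k: "k \<in> Kset a n" and k': "k' \<in> Kset a n" and eq: "psi a n k = psi a n k'"
  have S: "Sv a n k j = Sv a n k' j" if "1 \<le> j" "j \<le> n" for j
    using omega_eq[OF A k that] omega_eq[OF A k' that] eq by simp
  have S2: "Sv a n k (Suc j) = Sv a n k' (Suc j)" if "1 \<le> j" "j \<le> n" for j
  proof (cases "j = n")
    case True then show ?thesis by (simp add: Sv_Suc_n)
  next
    case False then show ?thesis using S[of "Suc j"] that by simp
  qed
  show "k = k'"
  proof
    fix i show "k i = k' i"
    proof (cases "i \<in> {1..n}")
      case True
      then have i: "1 \<le> i" "i \<le> n" by auto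
      have "real_of_int (a i) * Sv a n k i = real_of_int (a i) * Sv a n k' i" using S[OF i] by simp
      then have "real_of_int (k i + 1) = real_of_int (k' i + 1)"
        using Sv_rec[OF A i, of k] Sv_rec[OF A i, of k'] S[OF i] S2[OF i] by linarith
      then show ?thesis by simp
    next
      case False then show ?thesis using k k' by (simp add: Kset_def)
    qed
  qed
qed

lemma psi_in:
  assumes A: "\<forall>i\<in>{1..n}. a i \<ge> 2" and n: "n \<ge> 1" and k: "k \<in> Kset a n"
  shows "psi a n k \<in> Iprime a n"
proof -
  have Dn: "dd a n > 0" using dd_pos[OF A] by simp
  have b: "0 < Sv a n k 1" "Sv a n k 1 < 1" using Sv_bounds[OF A k, of 1] n by auto
  have "real_of_int (psi a n k) / real_of_int (dd a n) = Sv a n k 1"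
    using xv1[OF A, of k] by (simp add: xv_def)
  then have p: "real_of_int (psi a n k) = real_of_int (dd a n) * Sv a n k 1" using Dn by (simp add: field_simps)
  have "0 < real_of_int (psi a n k)" unfolding p using Dn b by simp
  moreover have "real_of_int (psi a n k) < real_of_int (dd a n)" unfolding p using Dn b by simp
  ultimately have r: "1 \<le> psi a n k" "psi a n k \<le> dd a n" by linarith+
  have nd: "\<not> a n dvd psi a n k"
  proof
    assume "a n dvd psi a n k"
    then obtain t where t: "psi a n k = a n * t" by blast
    have an: "a n \<ge> 2" using A n by auto
    have Dn1: "dd a n = dd a (n-1) * a n" using n dd_Suc[of a "n-1"] by simp
    have Dp: "dd a (n-1) > 0" using dd_pos[OF A, of "n-1"] by simp
    have "xv a n (psi a n k) n = (-1)^(n-1) * real_of_int t"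
      unfolding xv_def t Dn1 using an Dp by simp
    also have "\<dots> = real_of_int ((-1)^(n-1) * t)" by simp
    finally have "omega_kappa a n (psi a n k) n = 0" unfolding omega_kappa_xv by simp
    moreover have "0 < Sv a n k n" using Sv_bounds[OF A k, of n] n by auto
    ultimately show False using omega_eq[OF A k, of n] n by simp
  qed
  show ?thesis using r nd by (simp add: Iprime_def)
qed


lemma card_Iprime:
  assumes A: "\<forall>i\<in>{1..n}. a i \<ge> 2" and n: "n \<ge> 1"
  shows "int (card (Iprime a n)) = dd a n - dd a (n - 1)"
proof -
  have an: "a n \<ge> 2" using A n by auto
  have Dn1: "dd a n = dd a (n-1) * a n" using n dd_Suc[of a "n-1"] by simp
  have Dp: "dd a (n-1) > 0" using dd_pos[OF A, of "n-1"] by simp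
  let ?M = "(\<lambda>t. a n * t) ` {1..dd a (n-1)}"
  have eq: "Iprime a n = {1..dd a n} - ?M"
  proof (intro set_eqI iffI)
    fix x assume "x \<in> Iprime a n"
    then show "x \<in> {1..dd a n} - ?M" by (auto simp: Iprime_def)
  next
    fix x assume x: "x \<in> {1..dd a n} - ?M"
    have "\<not> a n dvd x"
    proof
      assume "a n dvd x"
      then obtain t where t: "x = a n * t" by blast
      have x1: "1 \<le> a n * t" "a n * t \<le> a n * dd a (n-1)" using x t Dn1 by (auto simp: mult.commute)
      have "1 \<le> t"
      proof (rule ccontr)
        assume "\<not> 1 \<le> t" then have "t \<le> 0" by simp
        then have "a n * t \<le> 0" using an by (simp add: mult_nonneg_nonpos)
        with x1 show False by simp
      qed
      moreover have "t \<le> dd a (n-1)" using x1(2) an by simp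
      ultimately show False using x t by auto
    qed
    then show "x \<in> Iprime a n" using x by (auto simp: Iprime_def)
  qed
  have sub: "?M \<subseteq> {1..dd a n}"
  proof
    fix y assume "y \<in> ?M"
    then obtain t where t0: "t \<in> {1..dd a (n-1)}" "y = a n * t" by (rule imageE)
    then have t: "y = a n * t" "1 \<le> t" "t \<le> dd a (n-1)" by auto
    have "a n * t \<le> a n * dd a (n-1)" using t an by simp
    moreover have "a n * 1 \<le> a n * t" using t an by (intro mult_left_mono) auto
    then have "1 \<le> a n * t" using an by linarith
    ultimately show "y \<in> {1..dd a n}" using t Dn1 by (simp add: mult.commute)
  qed
  have inj: "inj_on (\<lambda>t. a n * t) {1..dd a (n-1)}" using an by (auto intro: inj_onI)
  have "card (Iprime a n) = card {1..dd a n} - card ?M"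
    unfolding eq by (rule card_Diff_subset) (use sub in auto)
  also have "\<dots> = nat (dd a n) - nat (dd a (n-1))"
    using card_image[OF inj] by simp
  finally show ?thesis using Dn1 Dp an by (simp add: of_nat_diff nat_le_eq_zle)
qed

lemma card_Kset:
  assumes A: "\<forall>i\<in>{1..n}. a i \<ge> 2" and n: "n \<ge> 1"
  shows "int (card (Kset a n)) = dd a n - dd a (n - 1)"
proof -
  define B where "B i = (if i < n then {0..a i - 1} else {0..a n - 2})" for i
  have bij: "bij_betw (\<lambda>k. restrict k {1..n}) (Kset a n) (PiE {1..n} B)"
  proof -
    have "\<forall>k\<in>Kset a n. (\<lambda>i. if i \<in> {1..n} then restrict k {1..n} i else 0) = k"
      by (auto simp: Kset_def)
    moreover have "\<forall>h\<in>PiE {1..n} B. restrict (\<lambda>i. if i \<in> {1..n} then h i else 0) {1..n} = h"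
      by (auto simp: PiE_def extensional_def)
    moreover have "(\<lambda>k. restrict k {1..n}) ` Kset a n \<subseteq> PiE {1..n} B"
      by (auto simp: Kset_def B_def)
    moreover have "(\<lambda>h i. if i \<in> {1..n} then h i else 0) ` PiE {1..n} B \<subseteq> Kset a n"
      using n by (auto simp: Kset_def B_def PiE_def Pi_def)
    ultimately show ?thesis by (rule bij_betw_byWitness)
  qed
  have "card (Kset a n) = (\<Prod>i\<in>{1..n}. card (B i))"
    using bij_betw_same_card[OF bij] by (simp add: card_PiE)
  then have "int (card (Kset a n)) = (\<Prod>i\<in>{1..n}. int (card (B i)))" by simp
  also have "\<dots> = (\<Prod>i\<in>{1..n}. (if i < n then a i else a n - 1))"
  proof (rule prod.cong)
    fix i assume i: "i \<in> {1..n}"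
    then have "a i \<ge> 2" "a n \<ge> 2" using A n by auto
    then show "int (card (B i)) = (if i < n then a i else a n - 1)" by (simp add: B_def)
  qed simp
  also have "{1..n} = insert n {1..n-1}" using n by auto
  also have "(\<Prod>i\<in>insert n {1..n-1}. (if i < n then a i else a n - 1)) = (a n - 1) * (\<Prod>i\<in>{1..n-1}. (if i < n then a i else a n - 1))"
    by (subst prod.insert) (use n in auto)
  also have "(\<Prod>i\<in>{1..n-1}. (if i < n then a i else a n - 1)) = dd a (n-1)"
    unfolding dd_def by (rule prod.cong) (use n in auto)
  also have "dd a n = dd a (n-1) * a n" using n dd_Suc[of a "n-1"] by simp
  ultimately show ?thesis by (simp add: algebra_simps)
qed

theorem proposition2p15:
  fixes a :: "nat \<Rightarrow> int" and n :: nat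
  assumes "n \<ge> 1"
    and "\<forall>i\<in>{1..n}. a i \<ge> 2"
  shows "bij_betw (psi a n) (Kset a n) (Iprime a n)
    \<and> int (card (Kset a n)) = dd a n - dd a (n - 1)
    \<and> int (card (Iprime a n)) = dd a n - dd a (n - 1)
    \<and> (\<forall>k\<in>Kset a n. \<forall>i\<in>{1..n}. omega_kappa a n (psi a n k) i = omega_vec a n k i)
    \<and> psi a n (\<lambda>_. 0) = (\<Sum>l=1..n. (-1)^(l-1) * (dd a n div dd a l))"
proof -
  note A = assms(2) and n = assms(1)
  have inj: "inj_on (psi a n) (Kset a n)" by (rule psi_inj[OF A])
  have sub: "psi a n ` Kset a n \<subseteq> Iprime a n" using psi_in[OF A n] by auto
  have cK: "int (card (Kset a n)) = dd a n - dd a (n - 1)" by (rule card_Kset[OF A n])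
  have cI: "int (card (Iprime a n)) = dd a n - dd a (n - 1)" by (rule card_Iprime[OF A n])
  have fin: "finite (Iprime a n)" unfolding Iprime_def by (rule finite_subset[of _ "{1..dd a n}"]) auto
  have "psi a n ` Kset a n = Iprime a n"
    by (rule card_subset_eq[OF fin sub]) (use card_image[OF inj] cK cI in simp)
  then have bij: "bij_betw (psi a n) (Kset a n) (Iprime a n)" using inj by (simp add: bij_betw_def)
  have om: "\<forall>k\<in>Kset a n. \<forall>i\<in>{1..n}. omega_kappa a n (psi a n k) i = omega_vec a n k i"
    using omega_eq[OF A] omega_vec_Sv[OF A] by auto
  have "psi a n (\<lambda>_. 0) = (\<Sum>l=1..n. (-1)^(l-1) * (dd a n div dd a l))"
    by (simp add: psi_def)
  with bij cK cI om show ?thesis by blast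
qed

end
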